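(* Let $m\ge3$ be odd and let $s=s(m)$. For every integer $n\ge2$ and every $t\in1+2\mathbb{Z}_2$, one has $$v_2\big(T_m(1+2^nt)-(1+2^nt)\big)=s+n+1.$$
   Context: $v_2$ is the $2$-adic valuation on $\mathbb{Z}_2$. For an integer $m\ge0$, the $m$-th Chebyshev polynomial is $$T_m(x)=\sum_{k=0}^{\lfloor m/2\rfloor}(-1)^k\frac{m}{m-k}\binom{m-k}{k}2^{m-2k-1}x^{m-2k}.$$ For odd $m\ge3$, $s(m)=\max\{n\ge2:\ 2^n\mid(m+1)\text{ or }2^n\mid(m-1)\}$. *)

theory Defs imports Complex_Main "HOL-Library.Extended_Nat" begin

definition chebT :: "nat \<Rightarrow> rat \<Rightarrow> rat" where
  "chebT m x = (\<Sum>k\<le>m div 2. (-1)^k * (of_nat m / of_nat (m - k))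
      * of_nat ((m - k) choose k) * (2::rat) powi (int m - 2 * int k - 1) * x ^ (m - 2 * k))"

definition s_val :: "nat \<Rightarrow> nat" where
  "s_val m = Max {n. n \<ge> 2 \<and> (2^n dvd (m + 1) \<or> 2^n dvd (m - 1))}"

text \<open>2-adic integers Z_2 as the inverse limit of Z/2^k Z: compatible sequences
  of residues a k \<in> {0..<2^k}.\<close>
definition Z2 :: "(nat \<Rightarrow> int) set" where
  "Z2 = {a. \<forall>k. 0 \<le> a k \<and> a k < 2^k \<and> a (Suc k) mod 2^k = a k}"

text \<open>Applying an integer polynomial function f (compatible with congruences)
  to a 2-adic integer, componentwise modulo 2^k.\<close>
definition z2_map :: "(int \<Rightarrow> int) \<Rightarrow> (nat \<Rightarrow> int) \<Rightarrow> (nat \<Rightarrow> int)" where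
  "z2_map f a = (\<lambda>k. f (a k) mod 2^k)"

definition v2 :: "(nat \<Rightarrow> int) \<Rightarrow> enat" where
  "v2 a = (if \<forall>k. a k = 0 then \<infinity> else enat (LEAST k. a (Suc k) \<noteq> 0))"

end

theory Submission imports Defs begin


lemma induct2[case_names 0 1 step]:
  assumes "P 0" "P (Suc 0)" "\<And>j. P j \<Longrightarrow> P (Suc j) \<Longrightarrow> P (Suc (Suc j))"
  shows "P (n::nat)"
proof -
  have "P n \<and> P (Suc n)" by (induction n) (use assms in auto)
  thus ?thesis by simp
qed

fun Tc :: "nat \<Rightarrow> int \<Rightarrow> int" where
  "Tc 0 x = 1" | "Tc (Suc 0) x = x" | "Tc (Suc (Suc j)) x = 2*x*Tc (Suc j) x - Tc j x"
fun Vc :: "nat \<Rightarrow> int \<Rightarrow> int" where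
  "Vc 0 x = 0" | "Vc (Suc 0) x = 1" | "Vc (Suc (Suc j)) x = 2*x*Vc (Suc j) x - Vc j x"

lemma Tc_prod: "b \<le> a \<Longrightarrow> 2 * Tc b x * Tc a x = Tc (a+b) x + Tc (a-b) x"
proof (induction b arbitrary: a rule: induct2)
  case 0 then show ?case by simp
next
  case 1 then obtain d where "a = Suc d" by (cases a) auto
  then show ?case by simp
next
  case (step j)
  define d where "d = a - (j+2)"
  with step.prems have d: "a = j + 2 + d" by simp
  have e1: "Tc (a + Suc (Suc j)) x = 2*x*Tc (a + Suc j) x - Tc (a+j) x"
    by (simp add: d)
  have e2: "Tc (a - j) x = 2*x*Tc (a - Suc j) x - Tc (a - Suc (Suc j)) x"
    by (simp add: d numeral_2_eq_2)
  have h1: "2 * Tc j x * Tc a x = Tc (a+j) x + Tc (a-j) x" using step.IH(1)[of a] d by simp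
  have h2: "2 * Tc (Suc j) x * Tc a x = Tc (a+Suc j) x + Tc (a-Suc j) x" using step.IH(2)[of a] d by simp
  have "2 * Tc (Suc (Suc j)) x * Tc a x = 2*x*(2 * Tc (Suc j) x * Tc a x) - 2 * Tc j x * Tc a x"
    by (simp add: algebra_simps)
  also have "\<dots> = Tc (a + Suc (Suc j)) x + Tc (a - Suc (Suc j)) x"
    unfolding h1 h2 e1 e2 by (simp add: algebra_simps)
  finally show ?case .
qed

lemma Vc_prod: "b \<le> a \<Longrightarrow> 2 * Tc b x * Vc a x = Vc (a+b) x + Vc (a-b) x"
proof (induction b arbitrary: a rule: induct2)
  case 0 then show ?case by simp
next
  case 1 then obtain d where "a = Suc d" by (cases a) auto
  then show ?case by simp
next
  case (step j)
  define d where "d = a - (j+2)"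
  with step.prems have d: "a = j + 2 + d" by simp
  have e1: "Vc (a + Suc (Suc j)) x = 2*x*Vc (a + Suc j) x - Vc (a+j) x"
    by (simp add: d)
  have e2: "Vc (a - j) x = 2*x*Vc (a - Suc j) x - Vc (a - Suc (Suc j)) x"
    by (simp add: d numeral_2_eq_2)
  have h1: "2 * Tc j x * Vc a x = Vc (a+j) x + Vc (a-j) x" using step.IH(1)[of a] d by simp
  have h2: "2 * Tc (Suc j) x * Vc a x = Vc (a+Suc j) x + Vc (a-Suc j) x" using step.IH(2)[of a] d by simp
  have "2 * Tc (Suc (Suc j)) x * Vc a x = 2*x*(2 * Tc (Suc j) x * Vc a x) - 2 * Tc j x * Vc a x"
    by (simp add: algebra_simps)
  also have "\<dots> = Vc (a + Suc (Suc j)) x + Vc (a - Suc (Suc j)) x"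
    unfolding h1 h2 e1 e2 by (simp add: algebra_simps)
  finally show ?case .
qed

lemma Tc_double: "Tc (2*k) x = 2 * (Tc k x)^2 - 1"
proof -
  have h: "2 * Tc k x * Tc k x = Tc (k+k) x + Tc (k-k) x" by (rule Tc_prod) (rule order_refl)
  have "k + k = 2 * k" by simp
  with h have "2 * Tc k x * Tc k x = Tc (2*k) x + 1" by simp
  then show ?thesis by (simp add: power2_eq_square)
qed

lemma Vc_double: "Vc (2*k) x = 2 * Tc k x * Vc k x"
proof -
  have h: "2 * Tc k x * Vc k x = Vc (k+k) x + Vc (k-k) x" by (rule Vc_prod) (rule order_refl)
  have "k + k = 2 * k" by simp
  with h show ?thesis by simp
qed

lemma rel_up: "Tc (Suc j) x = x * Tc j x + (x^2-1) * Vc j x \<and> Tc j x = x * Tc (Suc j) x - (x^2-1) * Vc (Suc j) x"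
proof (induction j rule: induct2)
  case 0 then show ?case by (simp add: power2_eq_square)
next
  case 1 then show ?case by (simp add: power2_eq_square algebra_simps)
next
  case (step j)
  have e1: "Tc (Suc (Suc (Suc j))) x = 2*x*Tc (Suc (Suc j)) x - Tc (Suc j) x" by simp
  have e2: "Tc (Suc (Suc j)) x = 2*x*Tc (Suc j) x - Tc j x" by simp
  have e3: "Vc (Suc (Suc (Suc j))) x = 2*x*Vc (Suc (Suc j)) x - Vc (Suc j) x" by simp
  have e4: "Vc (Suc (Suc j)) x = 2*x*Vc (Suc j) x - Vc j x" by simp
  note a1 = conjunct1[OF step(1)] and a2 = conjunct2[OF step(1)]
  note a3 = conjunct1[OF step(2)] and a4 = conjunct2[OF step(2)]
  show ?case unfolding power2_eq_square using a1 a2 a3 a4 e1 e2 e3 e4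
    unfolding power2_eq_square by algebra
qed

lemma Tc_cong: "(a - b) dvd (Tc k a - Tc k b)"
proof (induction k rule: induct2)
  case 0 then show ?case by simp
next
  case 1 then show ?case by simp
next
  case (step j)
  have "Tc (Suc (Suc j)) a - Tc (Suc (Suc j)) b
      = 2*a*(Tc (Suc j) a - Tc (Suc j) b) + 2*(a-b)*Tc (Suc j) b - (Tc j a - Tc j b)"
    by (simp add: algebra_simps)
  also have "(a - b) dvd \<dots>"
  proof -
    have h1: "(a-b) dvd 2*a*(Tc (Suc j) a - Tc (Suc j) b)" using step(2) by (rule dvd_mult)
    have h2: "(a-b) dvd 2*(a-b)*Tc (Suc j) b" by (metis dvd_mult dvd_mult2 dvd_refl)
    show ?thesis by (rule dvd_diff[OF dvd_add[OF h1 h2] step(1)])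
  qed
  finally show ?case .
qed


lemma Tc_at1: "Tc k 1 = 1"
  by (induction k rule: induct2) auto

lemma Tc_one': "(x - 1) dvd (Tc k x - 1)"
  using Tc_cong[of x 1 k] by (simp add: Tc_at1)

lemma Vc_one: "(x - 1) dvd (Vc k x - int k)"
proof (induction k rule: induct2)
  case 0 then show ?case by simp
next
  case 1 then show ?case by simp
next
  case (step j)
  have "Vc (Suc (Suc j)) x - int (Suc (Suc j))
      = 2*x*(Vc (Suc j) x - int (Suc j)) - (Vc j x - int j) + 2*(int j + 1)*(x-1)"
    by (simp add: algebra_simps)
  also have "(x - 1) dvd \<dots>"
  proof -
    have h1: "(x-1) dvd 2*x*(Vc (Suc j) x - int (Suc j))" using step(2) by (rule dvd_mult)
    have h2: "(x-1) dvd 2*(int j + 1)*(x-1)" by (rule dvd_mult) (rule dvd_refl)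
    show ?thesis by (rule dvd_add[OF dvd_diff[OF h1 step(1)] h2])
  qed
  finally show ?case .
qed



lemma T_pow_dvd:
  assumes "(2::int)^n dvd (x - 1)" and "n \<ge> 1"
  shows "(2::int)^(n + 2*s) dvd (Tc (2^s*r) x - 1)"
proof (induction s)
  case 0
  then show ?case using assms Tc_one'[of x "r"] by (auto intro: dvd_trans)
next
  case (Suc s)
  define k where "k = 2^s*r"
  have k2: "2^(Suc s)*r = 2*k" by (simp add: k_def)
  have "(2::int) dvd 2^n" using assms(2) by (simp add: dvd_power)
  then have "(2::int) dvd (Tc k x - 1)" using assms(1) Tc_one'[of x k] by (blast intro: dvd_trans)
  then obtain e where e: "Tc k x - 1 = 2 * e" by (auto simp: dvd_def)
  define d where "d = e + 1"
  have d: "Tc k x + 1 = 2 * d" using e by (simp add: d_def)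
  obtain c where c: "Tc k x - 1 = 2^(n+2*s) * c" using Suc.IH unfolding k_def[symmetric] by (auto simp: dvd_def)
  have "Tc (2*k) x - 1 = 2 * (Tc k x - 1) * (Tc k x + 1)"
    unfolding Tc_double[of k x] power2_eq_square by (simp add: algebra_simps)
  also have "\<dots> = 2 * (2^(n+2*s) * c) * (2 * d)" by (simp only: c d)
  also have "\<dots> = 2^(n + 2*Suc s) * (c*d)" by (simp add: power_add)
  finally have "Tc (2*k) x - 1 = 2^(n + 2*Suc s) * (c*d)" .
  then show ?case unfolding k2 by (simp only: dvd_triv_left)
qed

lemma V_pow:
  assumes "odd x" and "odd r"
  shows "\<exists>q. odd q \<and> Vc (2^s*r) x = 2^s * q"
proof (induction s)
  case 0
  have "(2::int) dvd (x - 1)" using assms(1) by simp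
  then have "(2::int) dvd (Vc r x - int r)" using Vc_one[of x r] by (blast intro: dvd_trans)
  then have "odd (Vc r x)" using assms(2) by simp
  then show ?case by simp
next
  case (Suc s)
  then obtain q where q: "odd q" "Vc (2^s*r) x = 2^s * q" by blast
  have "(2::int) dvd (x - 1)" using assms(1) by simp
  then have "(2::int) dvd (Tc (2^s*r) x - 1)" using Tc_one'[of x] by (blast intro: dvd_trans)
  then have ot: "odd (Tc (2^s*r) x)" by simp
  have "Vc (2^Suc s*r) x = Vc (2*(2^s*r)) x" by (simp add: mult.assoc)
  also have "\<dots> = 2^Suc s * (Tc (2^s*r) x * q)" by (simp add: Vc_double q)
  finally show ?case using ot q(1) by auto
qed



lemma main_int:
  fixes m M r s n :: nat and u :: int
  assumes "M = m - 1 \<or> M = m + 1" "M = 2^s * r" "odd r" "s \<ge> 2" "n \<ge> 2" "odd u" "odd m"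
  shows "\<exists>oo1. odd oo1 \<and> Tc m (1 + 2^n*u) - (1+2^n*u) = 2^(s+n+1) * oo1"
proof -
  define x where "x = 1 + 2^n*u"
  obtain s' where s': "s = s' + 2" using assms(4) by (metis add.commute le_iff_add)
  obtain n' where n': "n = n' + 2" using assms(5) by (metis add.commute le_iff_add)
  have x1: "(2::int)^n dvd (x - 1)" by (simp add: x_def)
  have "(2::int)^(n + 2*s) dvd (Tc (2^s*r) x - 1)" by (rule T_pow_dvd[OF x1]) (use assms(5) in simp)
  then obtain c where c: "Tc M x - 1 = 2^(n+2*s) * c" using assms(2) by (auto simp: dvd_def)
  have ox: "odd x" using assms(5) by (simp add: x_def)
  obtain q where q: "odd q" "Vc M x = 2^s * q" using V_pow[OF ox assms(3), of s] assms(2) by auto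
  define w where "w = u * (1 + 2^(n'+1) * u)"
  have ow: "odd w" using assms(6) by (simp add: w_def)
  have xw: "x^2 - 1 = 2^(n+1) * w" by (simp add: x_def w_def n' power2_eq_square algebra_simps power_add)
  obtain \<sigma> :: int where sg: "\<sigma> = 1 \<or> \<sigma> = -1" and
      eq: "Tc m x = x * Tc M x + \<sigma> * (x^2 - 1) * Vc M x"
  proof (cases "M = m - 1")
    case True
    have "m = Suc M" using True assms(7) by (cases m) auto
    then show ?thesis using that[of 1] conjunct1[OF rel_up[of M x]] by simp
  next
    case False
    then have "M = Suc m" using assms(1) by simp
    have "Tc m x = x * Tc M x + (-1) * (x^2 - 1) * Vc M x"
      using conjunct2[OF rel_up[of m x]] \<open>M = Suc m\<close> by (simp add: algebra_simps)
    then show ?thesis using that[of "-1"] by blast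
  qed
  define oo1 where "oo1 = x * 2^(s'+1) * c + \<sigma> * w * q"
  have oo: "odd oo1" using sg ow q(1) by (auto simp: oo1_def)
  have "Tc m x - x = x * (Tc M x - 1) + \<sigma> * (x^2 - 1) * Vc M x" by (simp add: eq algebra_simps)
  also have "\<dots> = x * (2^(n+2*s) * c) + \<sigma> * (2^(n+1) * w) * (2^s * q)" by (simp only: c xw q(2))
  also have "\<dots> = 2^(s+n+1) * oo1" by (simp add: oo1_def s' power_add algebra_simps mult_2_right)
  finally show ?thesis using oo by (auto simp: x_def)
qed



definition cc :: "nat \<Rightarrow> nat \<Rightarrow> rat" where
  "cc m k = of_nat m / of_nat (m-k) * of_nat ((m-k) choose k)"

lemma aux_field:
  fixes a b X B :: rat assumes "a \<ge> 0" "b \<ge> 0" and hX: "X*(a+1) = (a+b+2)*B"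
  shows "(2*a+b+3)/(a+b+2) * X = (2*a+b+2)/(a+b+1) * (X - B) + (2*a+b+1)/(a+b+1)*B"
proof -
  define p where "p = a+b+2"
  define r where "r = a+b+1"
  have p: "p \<noteq> 0" and r: "r \<noteq> 0" using assms unfolding p_def r_def by linarith+
  have l: "(2*a+b+3)/p * X * (p*r) = (2*a+b+3)*X*r" using p by simp
  have rr: "((2*a+b+2)/r * (X - B) + (2*a+b+1)/r*B) * (p*r) = p*((2*a+b+2)*(X-B)+(2*a+b+1)*B)"
    using r by (simp add: field_simps)
  have m: "(2*a+b+3)*X*r = p*((2*a+b+2)*(X-B)+(2*a+b+1)*B)"
    using hX unfolding p_def r_def by algebra
  have "(2*a+b+3)/p * X * (p*r) = ((2*a+b+2)/r * (X - B) + (2*a+b+1)/r*B) * (p*r)"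
    using l rr m by (metis (no_types, lifting))
  then have "(2*a+b+3)/p * X = (2*a+b+2)/r * (X - B) + (2*a+b+1)/r*B"
    using p r by simp
  then show ?thesis unfolding p_def r_def .
qed

lemma cc_rec:
  fixes i q :: nat
  shows "cc (2*i+q+3) (i+1) = cc (2*i+q+2) (i+1) + cc (2*i+q+1) i"
proof -
  define X where "X = ((i+q+2) choose (i+1))"
  define Y where "Y = ((i+q+1) choose (i+1))"
  define B where "B = ((i+q+1) choose i)"
  have F1: "(i+q+2) * B = X * (i+1)" unfolding X_def B_def
    using Suc_times_binomial_eq[of "i+q+1" i] by simp
  have F2: "X = Y + B" unfolding X_def Y_def B_def
    using binomial_Suc_Suc[of "i+q+1" i] by simp
  have X: "(of_nat X::rat) * (of_nat i + 1) = (of_nat i + of_nat q + 2) * of_nat B"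
    using arg_cong[OF F1, of "of_nat :: nat \<Rightarrow> rat"] by (simp add: algebra_simps)
  have Y: "(of_nat Y::rat) = of_nat X - of_nat B" using F2 by simp
  have e1: "cc (2*i+q+3) (i+1) = of_nat (2*i+q+3) / of_nat (i+q+2) * of_nat X"
    unfolding cc_def X_def by (simp add: numeral_3_eq_3)
  have e2: "cc (2*i+q+2) (i+1) = of_nat (2*i+q+2) / of_nat (i+q+1) * of_nat Y"
    unfolding cc_def Y_def by (simp add: numeral_2_eq_2)
  have e3: "cc (2*i+q+1) i = of_nat (2*i+q+1) / of_nat (i+q+1) * of_nat B"
    unfolding cc_def B_def by simp
  have "cc (2*i+q+3) (i+1) = (2*of_nat i+of_nat q+3)/(of_nat i+of_nat q+2) * of_nat X"
    unfolding e1 by simp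
  also have "\<dots> = (2*of_nat i+of_nat q+2)/(of_nat i+of_nat q+1) * (of_nat X - of_nat B)
     + (2*of_nat i+of_nat q+1)/(of_nat i+of_nat q+1)*of_nat B"
    by (rule aux_field[OF _ _ X]) simp_all
  also have "\<dots> = cc (2*i+q+2) (i+1) + cc (2*i+q+1) i"
    unfolding e2 e3 Y by (simp add: algebra_simps)
  finally show ?thesis .
qed



definition tm :: "nat \<Rightarrow> nat \<Rightarrow> rat \<Rightarrow> rat" where
  "tm m k x = (-1)^k * (of_nat m / of_nat (m - k)) * of_nat ((m - k) choose k)
      * (2::rat) powi (int m - 2 * int k - 1) * x ^ (m - 2 * k)"

lemma chebT_tm: "chebT m x = (\<Sum>k\<le>m div 2. tm m k x)"
  unfolding chebT_def tm_def by simp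

lemma tm_cc: "tm m k x = (-1)^k * cc m k * (2::rat) powi (int m - 2 * int k - 1) * x ^ (m - 2 * k)"
  unfolding tm_def cc_def by (simp add: mult.assoc)

lemma pw: "2 * (2::rat) powi (int q - 1) = 2^q"
proof (cases q)
  case 0 then show ?thesis by (simp add: power_int_minus)
next
  case (Suc q') then show ?thesis by simp
qed

lemma termA: "tm (2*i+q+3) (i+1) x = 2*x*tm (2*i+q+2) (i+1) x - tm (2*i+q+1) i x"
proof -
  have e1: "int (2*i+q+3) - 2*int (i+1) - 1 = int q" "2*i+q+3 - 2*(i+1) = q+1" by simp_all
  have e2: "int (2*i+q+2) - 2*int (i+1) - 1 = int q - 1" "2*i+q+2 - 2*(i+1) = q" by simp_all
  have e3: "int (2*i+q+1) - 2*int i - 1 = int q" "2*i+q+1 - 2*i = q+1" by simp_all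
  have a1: "tm (2*i+q+3) (i+1) x = (-1)^(i+1) * cc (2*i+q+3) (i+1) * 2^q * x^(q+1)"
    unfolding tm_cc e1 by simp
  have a2: "2*x*tm (2*i+q+2) (i+1) x = (-1)^(i+1) * cc (2*i+q+2) (i+1) * (2 * 2 powi (int q - 1)) * x^(q+1)"
    unfolding tm_cc e2 by (simp add: algebra_simps)
  have a3: "tm (2*i+q+1) i x = (-1)^i * cc (2*i+q+1) i * 2^q * x^(q+1)"
    unfolding tm_cc e3 by simp
  show ?thesis unfolding a1 a2 a3 pw cc_rec by (simp add: algebra_simps)
qed

lemma termB: assumes "i \<ge> 1"
  shows "tm (2*i+2) (i+1) x = 2*x*tm (2*i+1) (i+1) x - tm (2*i) i x"
proof -
  have e1: "int (2*i+2) - 2*int (i+1) - 1 = -1" "2*i+2 - 2*(i+1) = 0" "2*i+2-(i+1) = i+1" by simp_all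
  have e3: "int (2*i) - 2*int i - 1 = -1" "2*i - 2*i = 0" "2*i - i = i" by simp_all
  have e2: "2*i+1-(i+1) = i" by simp
  have a1: "tm (2*i+2) (i+1) x = (-1)^(i+1)"
  proof -
    have "(of_nat (2*i+2)::rat) / of_nat (i+1) = 2" by (simp add: field_simps)
    then show ?thesis unfolding tm_def e1 by (simp add: power_int_minus)
  qed
  have a2: "tm (2*i+1) (i+1) x = 0"
    unfolding tm_def e2 by simp
  have a3: "tm (2*i) i x = (-1)^i"
    unfolding tm_def e3 using assms by (simp add: power_int_minus)
  show ?thesis unfolding a1 a2 a3 by simp
qed



lemma tm_zero: "m div 2 < k \<Longrightarrow> tm m k x = 0"
  unfolding tm_def by (simp add: binomial_eq_0)

lemma chebT_ext: "m div 2 \<le> N \<Longrightarrow> chebT m x = (\<Sum>k\<le>N. tm m k x)"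
  unfolding chebT_tm by (rule sum.mono_neutral_left) (auto simp: tm_zero)

lemma term_gen: assumes "m \<ge> 1" "i \<le> m div 2"
  shows "tm (m+2) (Suc i) x = 2*x*tm (m+1) (Suc i) x - tm m i x"
proof (cases "m = 2*i")
  case True
  then have "i \<ge> 1" using assms(1) by simp
  from termB[OF this, of x] True show ?thesis by (simp add: add.commute)
next
  case False
  define q where "q = m - 2*i - 1"
  have m: "m = 2*i+q+1" using False assms(2) unfolding q_def by linarith
  have h: "m+2 = 2*i+q+3" "m+1 = 2*i+q+2" "Suc i = i+1" using m by simp_all
  show ?thesis using termA[of i q x] h m by metis
qed

lemma term0: "m \<ge> 1 \<Longrightarrow> tm (m+2) 0 x = 2*x*tm (m+1) 0 x"
proof -
  assume m: "m \<ge> 1"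
  have e: "int (m+2) - 2 * int 0 - 1 = int (m+1)" "int (m+1) - 2 * int 0 - 1 = int m" by simp_all
  have a1: "tm (m+2) 0 x = 2^(m+1) * x^(m+2)" unfolding tm_def e by (simp add: power_int_add)
  have a2: "tm (m+1) 0 x = 2^m * x^(m+1)" unfolding tm_def e using m by simp
  show ?thesis unfolding a1 a2 by (simp add: algebra_simps)
qed

lemma cheb_rec: assumes "m \<ge> 1"
  shows "chebT (m+2) x = 2*x*chebT (m+1) x - chebT m x"
proof -
  define N where "N = m div 2"
  have "chebT (m+2) x = (\<Sum>k\<le>Suc N. tm (m+2) k x)"
    by (rule chebT_ext) (simp add: N_def)
  also have "\<dots> = tm (m+2) 0 x + (\<Sum>i\<le>N. tm (m+2) (Suc i) x)"
    by (rule sum.atMost_Suc_shift)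
  also have "\<dots> = 2*x*tm (m+1) 0 x + (\<Sum>i\<le>N. 2*x*tm (m+1) (Suc i) x - tm m i x)"
    using term0[OF assms] term_gen[OF assms] by (simp add: N_def)
  also have "\<dots> = 2*x*(tm (m+1) 0 x + (\<Sum>i\<le>N. tm (m+1) (Suc i) x)) - (\<Sum>i\<le>N. tm m i x)"
    by (simp add: sum_subtractf sum_distrib_left algebra_simps)
  also have "tm (m+1) 0 x + (\<Sum>i\<le>N. tm (m+1) (Suc i) x) = (\<Sum>k\<le>Suc N. tm (m+1) k x)"
    by (rule sum.atMost_Suc_shift[symmetric])
  also have "\<dots> = chebT (m+1) x"
    by (rule chebT_ext[symmetric]) (simp add: N_def; linarith)
  also have "(\<Sum>i\<le>N. tm m i x) = chebT m x"
    by (simp add: chebT_tm N_def)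
  finally show ?thesis .
qed

lemma cheb1: "chebT 1 x = x"
  unfolding chebT_tm tm_def by simp

lemma cheb2: "chebT 2 x = 2*x^2 - 1"
  unfolding chebT_tm tm_def by (simp add: power_int_minus numeral_2_eq_2)

lemma chebT_Tc: "m \<ge> 1 \<Longrightarrow> chebT m (of_int z) = of_int (Tc m z)"
proof -
  have "chebT (Suc j) (of_int z) = of_int (Tc (Suc j) z) \<and> chebT (Suc (Suc j)) (of_int z) = of_int (Tc (Suc (Suc j)) z)" for j
  proof (induction j)
    case 0 then show ?case using cheb1 cheb2[of "of_int z"] by (simp add: power2_eq_square numeral_2_eq_2)
  next
    case (Suc j)
    have "chebT (Suc j + 2) (of_int z) = 2*of_int z*chebT (Suc j+1) (of_int z) - chebT (Suc j) (of_int z)"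
      by (rule cheb_rec) simp
    then show ?case using Suc by simp
  qed
  moreover assume "m \<ge> 1"
  ultimately show ?thesis by (cases m) auto
qed



lemma pdvd_int: "odd (o1::int) \<Longrightarrow> ((2::int)^j dvd 2^e*o1) \<longleftrightarrow> j \<le> e"
proof
  assume o: "odd o1" and d: "(2::int)^j dvd 2^e*o1"
  show "j \<le> e"
  proof (rule ccontr)
    assume "\<not> j \<le> e"
    then have "(2::int)^(Suc e) dvd 2^j" by (intro le_imp_power_dvd) simp
    then have "(2::int)^(Suc e) dvd 2^e*o1" using d by (rule dvd_trans)
    then have "(2::int)^e * 2 dvd 2^e*o1" by (simp add: mult.commute)
    then have "2 dvd o1" by (subst (asm) dvd_mult_cancel_left) auto
    with o show False by simp
  qed
next
  assume "j \<le> e"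
  then show "(2::int)^j dvd 2^e*o1" by (intro dvd_mult2 le_imp_power_dvd)
qed

lemma pdvd_nat: "odd (o1::nat) \<Longrightarrow> ((2::nat)^j dvd 2^e*o1) \<longleftrightarrow> j \<le> e"
proof
  assume o: "odd o1" and d: "(2::nat)^j dvd 2^e*o1"
  show "j \<le> e"
  proof (rule ccontr)
    assume "\<not> j \<le> e"
    then have "(2::nat)^(Suc e) dvd 2^j" by (intro le_imp_power_dvd) simp
    then have "(2::nat)^(Suc e) dvd 2^e*o1" using d by (rule dvd_trans)
    then have "(2::nat)^e * 2 dvd 2^e*o1" by (simp add: mult.commute)
    then have "2 dvd o1" by (subst (asm) dvd_times_left_cancel_iff) auto
    with o show False by simp
  qed
next
  assume "j \<le> e"
  then show "(2::nat)^j dvd 2^e*o1" by (intro dvd_mult2 le_imp_power_dvd)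
qed

lemma ex_fact: "(M::nat) > 0 \<Longrightarrow> \<exists>s r. M = 2^s*r \<and> odd r"
proof (induction M rule: less_induct)
  case (less M)
  show ?case
  proof (cases "odd M")
    case True then show ?thesis by (intro exI[of _ 0] exI[of _ M]) auto
  next
    case False
    then obtain M' where M': "M = 2*M'" by blast
    with less.prems have "M' < M" "M' > 0" by auto
    with less.IH obtain s r where "M' = 2^s*r" "odd r" by blast
    then show ?thesis using M' by (intro exI[of _ "Suc s"] exI[of _ r]) auto
  qed
qed

lemma sval:
  assumes "odd m" "m \<ge> 3"
  shows "\<exists>M s r. (M = m-1 \<or> M = m+1) \<and> M = 2^s*r \<and> odd r \<and> s \<ge> 2 \<and> s_val m = s"
proof -
  obtain M M' where MM: "(M = m-1 \<and> M' = m+1) \<or> (M = m+1 \<and> M' = m-1)" and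
    d4: "4 dvd M" and nd4: "\<not> 4 dvd M'"
  proof (cases "m mod 4 = 1")
    case True
    then have "4 dvd m - 1" "\<not> 4 dvd m + 1" using assms by (auto simp: dvd_def; presburger)+
    then show ?thesis using that by blast
  next
    case False
    then have "m mod 4 = 3" using assms(1) by presburger
    then have "4 dvd m + 1" "\<not> 4 dvd m - 1" using assms by (auto simp: dvd_def; presburger)+
    then show ?thesis using that by blast
  qed
  have "M > 0" using MM assms by auto
  then obtain s r where sr: "M = 2^s*r" "odd r" using ex_fact by blast
  have s2: "s \<ge> 2"
  proof (rule ccontr)
    assume "\<not> s \<ge> 2"
    then have "(4::nat) dvd 2^s*r \<longleftrightarrow> 2 \<le> s" using pdvd_nat[OF sr(2), of 2 s] by simp
    with d4 sr(1) \<open>\<not> s \<ge> 2\<close> show False by simp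
  qed
  have S: "{j. j \<ge> 2 \<and> (2^j dvd (m + 1) \<or> 2^j dvd (m - 1))} = {2..s}"
  proof (rule set_eqI)
    fix j
    have "j \<ge> 2 \<Longrightarrow> \<not> 2^j dvd M'"
    proof
      assume "j \<ge> 2" "2^j dvd M'"
      moreover have "(4::nat) dvd 2^j" using \<open>j \<ge> 2\<close> le_imp_power_dvd[of 2 j "2::nat"] by simp
      ultimately show False using nd4 by (blast intro: dvd_trans)
    qed
    then show "j \<in> {j. j \<ge> 2 \<and> (2^j dvd (m + 1) \<or> 2^j dvd (m - 1))} \<longleftrightarrow> j \<in> {2..s}"
      using MM pdvd_nat[OF sr(2), of j s] sr(1) by auto
  qed
  have "s_val m = s" unfolding s_val_def S using s2 by (simp add: Max_eq_iff)
  then show ?thesis using MM sr s2 by blast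
qed



theorem mainTheorem6:
  fixes m n :: nat and t :: "nat \<Rightarrow> int"
  assumes "odd m" and "m \<ge> 3" and "n \<ge> 2"
    and "t \<in> Z2" and "t 1 = 1"
  shows "v2 (z2_map (\<lambda>x. \<lfloor>chebT m (of_int x)\<rfloor> - x) (z2_map (\<lambda>x. 1 + 2^n * x) t))
           = enat (s_val m + n + 1)"
proof -
  obtain M s r where Msr: "M = m-1 \<or> M = m+1" "M = 2^s*r" "odd r" "s \<ge> 2" "s_val m = s"
    using sval[OF assms(1,2)] by blast
  define e where "e = s + n + 1"
  define w where "w = z2_map (\<lambda>x. \<lfloor>chebT m (of_int x)\<rfloor> - x) (z2_map (\<lambda>x. 1 + 2^n * x) t)"
  have m1: "m \<ge> 1" using assms(2) by simp
  have tc: "t (Suc k) mod 2^k = t k" for k using assms(4) unfolding Z2_def by blast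
  have todd: "odd (t (Suc k))" for k
  proof (induction k)
    case 0 then show ?case using assms(5) by simp
  next
    case (Suc k)
    have "t (Suc (Suc k)) mod 2 = (t (Suc (Suc k)) mod 2^(Suc k)) mod 2"
      by (simp add: mod_mod_cancel)
    also have "\<dots> = t (Suc k) mod 2" by (simp only: tc)
    finally show ?case using Suc by (simp add: odd_iff_mod_2_eq_one)
  qed
  have wk: "w k = (Tc m (1+2^n*t k) - (1+2^n*t k)) mod 2^k" for k
  proof -
    define y where "y = 1 + 2^n * t k"
    define a where "a = y mod 2^k"
    have wa: "w k = (Tc m a - a) mod 2^k"
      unfolding w_def z2_map_def a_def y_def using chebT_Tc[OF m1] by simp
    have "(2::int)^k dvd (a - y)" unfolding a_def by (simp add: mod_eq_dvd_iff[symmetric])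
    then have "(2::int)^k dvd (Tc m a - Tc m y)" using Tc_cong[of a y m] by (rule dvd_trans)
    then have "(2::int)^k dvd ((Tc m a - Tc m y) - (a - y))"
      using \<open>(2::int)^k dvd (a - y)\<close> by (rule dvd_diff)
    moreover have "(Tc m a - Tc m y) - (a - y) = (Tc m a - a) - (Tc m y - y)" by simp
    ultimately have "(2::int)^k dvd ((Tc m a - a) - (Tc m y - y))" by simp
    then have "(Tc m a - a) mod 2^k = (Tc m y - y) mod 2^k" by (simp add: mod_eq_dvd_iff)
    then show ?thesis using wa by (simp add: y_def)
  qed
  have key: "w (Suc k) = 0 \<longleftrightarrow> Suc k \<le> e" for k
  proof -
    obtain o1 where o1: "odd o1" "Tc m (1 + 2^n*t (Suc k)) - (1+2^n*t (Suc k)) = 2^(s+n+1) * o1"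
      using main_int[OF Msr(1,2,3,4) assms(3) todd[of k] assms(1)] by blast
    have "w (Suc k) = (2^e * o1) mod 2^(Suc k)" using wk[of "Suc k"] o1(2) by (simp add: e_def)
    then show ?thesis using pdvd_int[OF o1(1), of "Suc k" e] by (simp add: dvd_eq_mod_eq_0)
  qed
  have ne: "w (Suc e) \<noteq> 0" using key[of e] by simp
  have "(LEAST k. w (Suc k) \<noteq> 0) = e"
    by (rule Least_equality) (use key ne in auto)
  then have "v2 w = enat e" unfolding v2_def using ne by auto
  then show ?thesis unfolding w_def e_def Msr(5) .
qed

end
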